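(* Let $C\subseteq U^{\ge0}$ be a right coideal, $\beta\in Q$ and $x\in C_\beta\setminus\{0\}$. Let $J$ be a left coideal of $U^{\ge0}$ which is homogeneous with respect to the decomposition $U^{\ge0}=\bigoplus_{\alpha,\gamma\in Q}U^+_\alpha K_\gamma$. Let $\gamma\in Q$ be maximal with respect to $\prec$ such that $\mathrm{pr}_{(\gamma,\beta)}(x)\notin J$. Then $K_{\beta+\gamma}\in C$.
   Context: Setting: $\mathfrak g$ finite-dimensional complex semisimple, simple roots $\Pi$, invariant scalar product $(\cdot,\cdot)$, $Q=\mathbb Z\Pi$, $Q_+=\mathbb N_0\Pi$; $\gamma\prec\alpha$ means $\alpha-\gamma\in Q_+\setminus\{0\}$. $k$ field, $q\in k^\times$ not a root of unity; $U=U_q(\mathfrak g)$ as in Jantzen Ch. 4 with $\Delta(E_\alpha)=E_\alpha\otimes1+K_\alpha\otimes E_\alpha$, $\Delta(K_\alpha)=K_\alpha\otimes K_\alpha$; $U^+,U^0$ generated by $\{E_\alpha\},\{K_\alpha^{\pm1}\}$, $U^{\ge0}=U^+U^0$, $K_\beta=\prod K_\alpha^{n_\alpha}$, $U^+_\alpha=\{x\in U^+\,|\,K_\delta xK_\delta^{-1}=q^{(\delta,\alpha)}x\ \forall\delta\}$, projections $\mathrm{pr}_{(\alpha,\beta)}:U^{\ge0}\to U^+_\alpha K_\beta$. Right coideal: $\Delta(C)\subseteq C\otimes U^{\ge0}$; left coideal: $\Delta(J)\subseteq U^{\ge0}\otimes J$. $C_\beta=U^+K_\beta\cap C$. *)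

theory Defs
  imports Complex_Main
begin

text \<open>Simple roots are indexed by a finite type 'i; an element of the root lattice Q = Z Pi
is represented by its coefficient vector 'i => int (Pi is a basis of Q). The invariant scalar
product is given by its Gram matrix B i j = (alpha_i, alpha_j) on the simple roots.\<close>

type_synonym 'i rlat = "'i \<Rightarrow> int"

definition sroot :: "'i \<Rightarrow> 'i rlat" where
  "sroot i = (\<lambda>j. if j = i then 1 else 0)"

definition ip :: "('i::finite \<Rightarrow> 'i \<Rightarrow> int) \<Rightarrow> 'i rlat \<Rightarrow> 'i rlat \<Rightarrow> int" where
  "ip B a b = (\<Sum>i\<in>UNIV. \<Sum>j\<in>UNIV. a i * B i j * b j)"

text \<open>B is the Gram matrix of the simple roots of a finite-dimensional complex semisimple Lie
algebra with respect to an invariant (positive definite) scalar product for which (alpha,alpha)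
is an even integer and (alpha,beta) is an integer (Jantzen's normalization is an instance):
symmetric, positive definite, and the Cartan integers 2(alpha_i,alpha_j)/(alpha_i,alpha_i)
are non-positive integers for i ~= j.  (Such B are exactly these Gram matrices.)\<close>

definition semisimple_form :: "('i::finite \<Rightarrow> 'i \<Rightarrow> int) \<Rightarrow> bool" where
  "semisimple_form B \<longleftrightarrow>
     (\<forall>i j. B i j = B j i) \<and>
     (\<forall>i. 0 < B i i \<and> even (B i i)) \<and>
     (\<forall>i j. i \<noteq> j \<longrightarrow> B i j \<le> 0 \<and> B i i dvd 2 * B i j) \<and>
     (\<forall>v::'i \<Rightarrow> real. v \<noteq> (\<lambda>_. 0) \<longrightarrow>
        0 < (\<Sum>i\<in>UNIV. \<Sum>j\<in>UNIV. v i * real_of_int (B i j) * v j))"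

definition cartan :: "('i \<Rightarrow> 'i \<Rightarrow> int) \<Rightarrow> 'i \<Rightarrow> 'i \<Rightarrow> int" where
  "cartan B i j = 2 * B i j div B i i"

definition rprec :: "'i rlat \<Rightarrow> 'i rlat \<Rightarrow> bool" where
  "rprec g a \<longleftrightarrow> (\<forall>i. g i \<le> a i) \<and> g \<noteq> a"

definition qnum :: "'k::field \<Rightarrow> nat \<Rightarrow> 'k" where
  "qnum t n = (\<Sum>j<n. t powi (int n - 1 - 2 * int j))"

definition qfact :: "'k::field \<Rightarrow> nat \<Rightarrow> 'k" where
  "qfact t n = (\<Prod>m\<in>{1..n}. qnum t m)"

definition qbinom :: "'k::field \<Rightarrow> nat \<Rightarrow> nat \<Rightarrow> 'k" where
  "qbinom t n r = qfact t n / (qfact t r * qfact t (n - r))"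

text \<open>A monomial (w, gamma) stands for E_w K_gamma = E_{w_1} ... E_{w_n} K_gamma.
Elements are finitely supported coefficient functions.\<close>

type_synonym 'i mon = "'i list \<times> 'i rlat"

definition deg :: "'i list \<Rightarrow> 'i rlat" where
  "deg w = (\<lambda>j. int (length (filter (\<lambda>x. x = j) w)))"

definition supp :: "('m \<Rightarrow> 'k::zero) \<Rightarrow> 'm set" where
  "supp f = {m. f m \<noteq> 0}"

definition fin :: "('m \<Rightarrow> 'k::zero) set" where
  "fin = {f. finite (supp f)}"

definition mono :: "'m \<Rightarrow> 'm \<Rightarrow> 'k::{zero,one}" where
  "mono m = (\<lambda>n. if n = m then 1 else 0)"

text \<open>(E_w K_gamma)(E_v K_delta) = q^(gamma, deg v) E_{wv} K_{gamma+delta}\<close>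
definition mmul :: "('i::finite \<Rightarrow> 'i \<Rightarrow> int) \<Rightarrow> 'k::field \<Rightarrow> 'i mon \<Rightarrow> 'i mon \<Rightarrow> 'k \<times> 'i mon" where
  "mmul B q m n = (q powi ip B (snd m) (deg (fst n)),
                   (fst m @ fst n, \<lambda>j. snd m j + snd n j))"

definition tw_mult :: "('m \<Rightarrow> 'm \<Rightarrow> 'k::field \<times> 'm) \<Rightarrow> ('m \<Rightarrow> 'k) \<Rightarrow> ('m \<Rightarrow> 'k) \<Rightarrow> ('m \<Rightarrow> 'k)" where
  "tw_mult mm f g = (\<lambda>m. \<Sum>p\<in>supp f \<times> supp g.
      if snd (mm (fst p) (snd p)) = m then f (fst p) * g (snd p) * fst (mm (fst p) (snd p)) else 0)"

definition umult :: "('i::finite \<Rightarrow> 'i \<Rightarrow> int) \<Rightarrow> 'k::field \<Rightarrow> ('i mon \<Rightarrow> 'k) \<Rightarrow> ('i mon \<Rightarrow> 'k) \<Rightarrow> ('i mon \<Rightarrow> 'k)" where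
  "umult B q = tw_mult (mmul B q)"

definition Egen :: "'i \<Rightarrow> 'i mon \<Rightarrow> 'k::field" where
  "Egen i = mono ([i], \<lambda>_. 0)"

definition Kel :: "'i rlat \<Rightarrow> 'i mon \<Rightarrow> 'k::field" where
  "Kel g = mono ([], g)"

definition lspan :: "('m \<Rightarrow> 'k::field) set \<Rightarrow> ('m \<Rightarrow> 'k) set" where
  "lspan S = {f. \<exists>A c. finite A \<and> A \<subseteq> S \<and> f = (\<lambda>m. \<Sum>v\<in>A. c v * v m)}"

definition subsp :: "('m \<Rightarrow> 'k::field) set \<Rightarrow> bool" where
  "subsp S \<longleftrightarrow> S \<subseteq> fin \<and> (\<lambda>_. 0) \<in> S \<and>
     (\<forall>f\<in>S. \<forall>g\<in>S. (\<lambda>m. f m + g m) \<in> S) \<and> (\<forall>c. \<forall>f\<in>S. (\<lambda>m. c * f m) \<in> S)"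

definition serre :: "('i::finite \<Rightarrow> 'i \<Rightarrow> int) \<Rightarrow> 'k::field \<Rightarrow> 'i \<Rightarrow> 'i \<Rightarrow> 'i mon \<Rightarrow> 'k" where
  "serre B q i j = (let N = nat (1 - cartan B i j); qi = q powi (B i i div 2) in
     (\<lambda>m. \<Sum>r\<in>{0..N}. (-1) ^ r * qbinom qi N r *
          mono (replicate (N - r) i @ [j] @ replicate r i, \<lambda>_. 0) m))"

text \<open>The two-sided ideal I generated by the Serre elements; U^{>=0} = F / I.\<close>
definition serre_ideal :: "('i::finite \<Rightarrow> 'i \<Rightarrow> int) \<Rightarrow> 'k::field \<Rightarrow> ('i mon \<Rightarrow> 'k) set" where
  "serre_ideal B q = lspan {umult B q (umult B q (mono m1) (serre B q i j)) (mono m2)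
                           | m1 m2 i j. i \<noteq> j}"

definition tens :: "('m \<Rightarrow> 'k::field) \<Rightarrow> ('m \<Rightarrow> 'k) \<Rightarrow> ('m \<times> 'm \<Rightarrow> 'k)" where
  "tens f g = (\<lambda>p. f (fst p) * g (snd p))"

definition tmmul :: "('m \<Rightarrow> 'm \<Rightarrow> 'k::field \<times> 'm) \<Rightarrow> 'm \<times> 'm \<Rightarrow> 'm \<times> 'm \<Rightarrow> 'k \<times> ('m \<times> 'm)" where
  "tmmul mm a b = (fst (mm (fst a) (fst b)) * fst (mm (snd a) (snd b)),
                   (snd (mm (fst a) (fst b)), snd (mm (snd a) (snd b))))"

text \<open>Delta(E_i) = E_i (x) 1 + K_i (x) E_i, Delta(K_g) = K_g (x) K_g, multiplicative.\<close>
fun Dmon :: "('i::finite \<Rightarrow> 'i \<Rightarrow> int) \<Rightarrow> 'k::field \<Rightarrow> 'i list \<Rightarrow> 'i rlat \<Rightarrow> ('i mon \<times> 'i mon \<Rightarrow> 'k)" where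
  "Dmon B q [] g = tens (Kel g) (Kel g)"
| "Dmon B q (i # w) g = tw_mult (tmmul (mmul B q))
      (\<lambda>p. tens (Egen i) (Kel (\<lambda>_. 0)) p + tens (Kel (sroot i)) (Egen i) p)
      (Dmon B q w g)"

definition Delta :: "('i::finite \<Rightarrow> 'i \<Rightarrow> int) \<Rightarrow> 'k::field \<Rightarrow> ('i mon \<Rightarrow> 'k) \<Rightarrow> ('i mon \<times> 'i mon \<Rightarrow> 'k)" where
  "Delta B q f = (\<lambda>p. \<Sum>m\<in>supp f. f m * Dmon B q (fst m) (snd m) p)"

definition pr :: "'i rlat \<Rightarrow> 'i rlat \<Rightarrow> ('i mon \<Rightarrow> 'k::zero) \<Rightarrow> ('i mon \<Rightarrow> 'k)" where
  "pr a g f = (\<lambda>m. if deg (fst m) = a \<and> snd m = g then f m else 0)"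

text \<open>A subspace C of U^{>=0} = F/I corresponds to its preimage C' in F (a subspace containing I).
Delta(C) \<subseteq> C (x) U^{>=0} in U^{>=0} (x) U^{>=0} means Delta(C') \<subseteq> C' (x) F + F (x) I.\<close>

definition right_coideal :: "('i::finite \<Rightarrow> 'i \<Rightarrow> int) \<Rightarrow> 'k::field \<Rightarrow> ('i mon \<Rightarrow> 'k) set \<Rightarrow> bool" where
  "right_coideal B q C \<longleftrightarrow> subsp C \<and> serre_ideal B q \<subseteq> C \<and>
     (\<forall>c\<in>C. Delta B q c \<in> lspan ({tens a b | a b. a \<in> C \<and> b \<in> fin} \<union>
                                   {tens a b | a b. a \<in> fin \<and> b \<in> serre_ideal B q}))"

definition left_coideal :: "('i::finite \<Rightarrow> 'i \<Rightarrow> int) \<Rightarrow> 'k::field \<Rightarrow> ('i mon \<Rightarrow> 'k) set \<Rightarrow> bool" where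
  "left_coideal B q J \<longleftrightarrow> subsp J \<and> serre_ideal B q \<subseteq> J \<and>
     (\<forall>c\<in>J. Delta B q c \<in> lspan ({tens a b | a b. a \<in> fin \<and> b \<in> J} \<union>
                                   {tens a b | a b. a \<in> serre_ideal B q \<and> b \<in> fin}))"

definition homogeneous :: "('i mon \<Rightarrow> 'k::zero) set \<Rightarrow> bool" where
  "homogeneous J \<longleftrightarrow> (\<forall>c\<in>J. \<forall>a g. pr a g c \<in> J)"

end

theory Submission
  imports Defs
begin


lemma deg_nil[simp]: "deg [] = (\<lambda>j. 0)"
  by (simp add: deg_def)

lemma deg_cons: "deg (i # w) = (\<lambda>j. (if j = i then 1 else 0) + deg w j)"
  by (auto simp: deg_def)

lemma deg_append: "deg (a @ b) = (\<lambda>j. deg a j + deg b j)"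
  by (auto simp: deg_def)

lemma deg_nonneg: "0 \<le> deg w j"
  by (simp add: deg_def)

lemma deg_zero: "deg w = (\<lambda>j. 0) \<Longrightarrow> w = []"
proof (cases w)
  case (Cons a u)
  assume "deg w = (\<lambda>j. 0)"
  then have "deg w a = 0" by simp
  moreover have "deg w a \<ge> 1" using Cons deg_nonneg[of u a] by (simp add: deg_cons)
  ultimately show ?thesis by simp
qed simp

lemma deg_single: "deg [i] = sroot i"
  by (auto simp: deg_def sroot_def)

lemma length_deg: "int (length w) = (\<Sum>j\<in>(UNIV::'i::finite set). deg w j)"
proof (induction w)
  case Nil then show ?case by simp
next
  case (Cons a w)
  have "(\<Sum>j\<in>(UNIV::'i set). deg (a#w) j) = (\<Sum>j\<in>UNIV. (if j = a then 1 else 0)) + (\<Sum>j\<in>UNIV. deg w j)"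
    by (simp add: deg_cons sum.distrib)
  also have "\<dots> = 1 + int (length w)" using Cons by simp
  finally show ?case by simp
qed

definition lin :: "(('m \<Rightarrow> 'k::field) \<Rightarrow> 'k) \<Rightarrow> bool" where
  "lin \<phi> \<longleftrightarrow> (\<forall>u w. \<phi> (\<lambda>n. u n + w n) = \<phi> u + \<phi> w) \<and> (\<forall>c u. \<phi> (\<lambda>n. c * u n) = c * \<phi> u)"

lemma lin_add: "lin \<phi> \<Longrightarrow> \<phi> (\<lambda>n. u n + w n) = \<phi> u + \<phi> w"
  unfolding lin_def by blast

lemma lin_smult: "lin \<phi> \<Longrightarrow> \<phi> (\<lambda>n. c * u n) = c * \<phi> u"
  unfolding lin_def by blast

lemma lin_zero: "lin \<phi> \<Longrightarrow> \<phi> (\<lambda>_. 0) = 0"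
  using lin_smult[of \<phi> 0 "\<lambda>_. 0"] by simp

lemma lin_sum: "lin \<phi> \<Longrightarrow> \<phi> (\<lambda>n. \<Sum>v\<in>A. c v * h v n) = (\<Sum>v\<in>A. c v * \<phi> (h v))"
proof (induction A rule: infinite_finite_induct)
  case (infinite A) then show ?case by (simp add: lin_zero)
next
  case empty then show ?case by (simp add: lin_zero)
next
  case (insert a A)
  have "\<phi> (\<lambda>n. \<Sum>v\<in>insert a A. c v * h v n) = \<phi> (\<lambda>n. c a * h a n + (\<Sum>v\<in>A. c v * h v n))"
    using insert by simp
  also have "\<dots> = c a * \<phi> (h a) + \<phi> (\<lambda>n. (\<Sum>v\<in>A. c v * h v n))"
    using lin_add[OF insert(4), of "\<lambda>n. c a * h a n" "\<lambda>n. (\<Sum>v\<in>A. c v * h v n)"]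
      lin_smult[OF insert(4), of "c a" "h a"] by simp
  finally show ?case using insert by simp
qed

lemma cl_add: "\<forall>f\<in>W. \<forall>g\<in>W. (\<lambda>n. f n + g n) \<in> W \<Longrightarrow> f \<in> W \<Longrightarrow> g \<in> W \<Longrightarrow> (\<lambda>n. f n + g n) \<in> W"
  by blast

lemma cl_smult: "\<forall>c. \<forall>f\<in>W. (\<lambda>n. c * f n) \<in> W \<Longrightarrow> f \<in> W \<Longrightarrow> (\<lambda>n. c * f n) \<in> W"
  by blast

lemma sep:
  fixes W :: "('m \<Rightarrow> 'k::field) set"
  assumes "finite M" "(\<lambda>_. 0) \<in> W" "\<forall>f\<in>W. \<forall>g\<in>W. (\<lambda>n. f n + g n) \<in> W"
    "\<forall>c. \<forall>f\<in>W. (\<lambda>n. c * f n) \<in> W" "\<forall>w\<in>W. \<forall>n. n \<notin> M \<longrightarrow> w n = 0"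
    "\<forall>n. n \<notin> M \<longrightarrow> v n = 0" "v \<notin> W"
  shows "\<exists>\<phi>. lin \<phi> \<and> (\<forall>w\<in>W. \<phi> w = 0) \<and> \<phi> v \<noteq> 0"
  using assms
proof (induction M arbitrary: W v rule: finite_induct)
  case empty
  then have "v = (\<lambda>_. 0)" by auto
  then show ?case using empty by simp
next
  case (insert m M)
  show ?case
  proof (cases "\<forall>w\<in>W. w m = 0")
    case True
    show ?thesis
    proof (cases "v m = 0")
      case False
      have "lin (\<lambda>u. u m)" by (simp add: lin_def)
      then show ?thesis using True False by blast
    next
      case vm: True
      have "\<forall>w\<in>W. \<forall>n. n \<notin> M \<longrightarrow> w n = 0"
      proof (intro ballI allI impI)
        fix w n assume "w \<in> W" "n \<notin> M"
        then show "w n = 0" using True insert.prems(4) by (cases "n = m") auto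
      qed
      moreover have "\<forall>n. n \<notin> M \<longrightarrow> v n = 0" using vm insert.prems(5) by auto
      ultimately show ?thesis using insert.IH[of W v] insert.prems by blast
    qed
  next
    case False
    then obtain w0 where w0: "w0 \<in> W" "w0 m \<noteq> 0" by blast
    define w1 where "w1 = (\<lambda>n. inverse (w0 m) * w0 n)"
    have w1: "w1 \<in> W" "w1 m = 1" using w0 insert.prems(3) by (auto simp: w1_def)
    define P where "P = (\<lambda>u::'m\<Rightarrow>'k. (\<lambda>n. u n + (- u m) * w1 n))"
    define W' where "W' = {w\<in>W. w m = 0}"
    have PW: "P w \<in> W" if "w \<in> W" for w
    proof -
      have s: "(\<lambda>n. (- w m) * w1 n) \<in> W" using w1(1) insert.prems(3) by blast
      have "(\<lambda>n. w n + (\<lambda>n. (- w m) * w1 n) n) \<in> W"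
        by (rule cl_add[OF insert.prems(2) that s])
      then show ?thesis by (simp add: P_def)
    qed
    have Pm: "P u m = 0" for u using w1 by (simp add: P_def)
    have PW': "P w \<in> W'" if "w \<in> W" for w using PW[OF that] Pm by (simp add: W'_def)
    have "(\<lambda>_. 0) \<in> W'" using insert.prems(1) by (simp add: W'_def)
    moreover have "\<forall>f\<in>W'. \<forall>g\<in>W'. (\<lambda>n. f n + g n) \<in> W'" using insert.prems(2) by (auto simp: W'_def)
    moreover have "\<forall>c. \<forall>f\<in>W'. (\<lambda>n. c * f n) \<in> W'" using insert.prems(3) by (auto simp: W'_def)
    moreover have "\<forall>w\<in>W'. \<forall>n. n \<notin> M \<longrightarrow> w n = 0" using insert.prems(4) by (auto simp: W'_def)
    moreover have "\<forall>n. n \<notin> M \<longrightarrow> P v n = 0"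
    proof (intro allI impI)
      fix n assume n: "n \<notin> M"
      show "P v n = 0"
      proof (cases "n = m")
        case True then show ?thesis using Pm by simp
      next
        case False
        then have "v n = 0" "w1 n = 0" using n insert.prems(4,5) w1(1) by auto
        then show ?thesis by (simp add: P_def)
      qed
    qed
    moreover have "P v \<notin> W'"
    proof
      assume "P v \<in> W'"
      then have a: "P v \<in> W" by (simp add: W'_def)
      have b: "(\<lambda>n. v m * w1 n) \<in> W" by (rule cl_smult[OF insert.prems(3) w1(1)])
      have "(\<lambda>n. P v n + v m * w1 n) \<in> W" by (rule cl_add[OF insert.prems(2) a b])
      moreover have "(\<lambda>n. P v n + v m * w1 n) = v" by (auto simp: P_def algebra_simps)
      ultimately show False using insert.prems(6) by simp
    qed
    ultimately obtain \<phi>' where ph: "lin \<phi>'" "\<forall>w\<in>W'. \<phi>' w = 0" "\<phi>' (P v) \<noteq> 0"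
      using insert.IH[of W' "P v"] by blast
    have "lin (\<lambda>u. \<phi>' (P u))"
    proof -
      have "P (\<lambda>n. u n + w n) = (\<lambda>n. P u n + P w n)" for u w by (auto simp: P_def algebra_simps)
      moreover have "P (\<lambda>n. c * u n) = (\<lambda>n. c * P u n)" for c u by (auto simp: P_def algebra_simps)
      ultimately show ?thesis using ph(1) unfolding lin_def by simp
    qed
    then show ?thesis using ph PW' by blast
  qed
qed



lemma sum_single:
  assumes "finite A" "\<forall>x\<in>A. f x \<noteq> 0 \<longrightarrow> x = a"
  shows "sum f A = (if a \<in> A then f a else (0::'b::comm_monoid_add))"
proof (cases "a \<in> A")
  case True
  have "sum f A = f a + sum f (A - {a})" using assms(1) True by (simp add: sum.remove)
  moreover have "sum f (A - {a}) = 0" using assms(2) by (intro sum.neutral) auto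
  ultimately show ?thesis using True by simp
next
  case False
  then show ?thesis using assms(2) by (auto intro: sum.neutral)
qed

lemma supp_tw: "supp (tw_mult mm f g) \<subseteq> (\<lambda>p. snd (mm (fst p) (snd p))) ` (supp f \<times> supp g)"
proof
  fix m assume m: "m \<in> supp (tw_mult mm f g)"
  show "m \<in> (\<lambda>p. snd (mm (fst p) (snd p))) ` (supp f \<times> supp g)"
  proof (rule ccontr)
    assume "m \<notin> (\<lambda>p. snd (mm (fst p) (snd p))) ` (supp f \<times> supp g)"
    then have "tw_mult mm f g m = 0" unfolding tw_mult_def by (intro sum.neutral) force
    then show False using m by (simp add: supp_def)
  qed
qed

definition Xi :: "'i \<Rightarrow> 'i mon \<times> 'i mon \<Rightarrow> 'k::field" where
  "Xi i = (\<lambda>p. tens (Egen i) (Kel (\<lambda>_. 0)) p + tens (Kel (sroot i)) (Egen i) p)"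

lemma Dmon_cons: "Dmon B q (i # w) g = tw_mult (tmmul (mmul B q)) (Xi i) (Dmon B q w g)"
  by (simp add: Xi_def)

lemma Xi_supp: "supp (Xi i) \<subseteq> {(([i], \<lambda>_. 0), ([], \<lambda>_. 0)), (([], sroot i), ([i], \<lambda>_. 0))}"
  by (auto simp: supp_def Xi_def tens_def Egen_def Kel_def mono_def split: if_splits)

lemma Xi_val: "Xi i (([], sroot i), ([i], \<lambda>_. 0)) = 1"
  by (simp add: Xi_def tens_def Egen_def Kel_def mono_def)

lemma fin_Dmon:
  fixes B :: "'i::finite \<Rightarrow> 'i \<Rightarrow> int" and q :: "'k::field"
  shows "finite (supp (Dmon B q w g))"
proof (induction w)
  case Nil
  have "supp (Dmon B q [] g) \<subseteq> {(([], g), ([], g))}"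
    by (auto simp: supp_def tens_def Kel_def mono_def split: if_splits)
  then show ?case by (rule finite_subset) simp
next
  case (Cons i w)
  have "finite (supp (Xi i :: _ \<Rightarrow> 'k))" by (rule finite_subset[OF Xi_supp]) simp
  then show ?case unfolding Dmon_cons using Cons
    by (intro finite_subset[OF supp_tw]) auto
qed

lemma Dmon_inv:
  fixes B :: "'i::finite \<Rightarrow> 'i \<Rightarrow> int" and q :: "'k::field"
  shows "Dmon B q w g (k, n) \<noteq> 0 \<Longrightarrow> (\<forall>j. deg (fst k) j + deg (fst n) j = deg w j) \<and> snd n = g"
proof (induction w arbitrary: k n)
  case Nil
  then show ?case by (auto simp: tens_def Kel_def mono_def split: if_splits)
next
  case (Cons i w)
  then have "(k, n) \<in> supp (Dmon B q (i # w) g)" by (simp add: supp_def)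
  then have "(k, n) \<in> (\<lambda>p. snd (tmmul (mmul B q) (fst p) (snd p))) ` (supp (Xi i :: _ \<Rightarrow> 'k) \<times> supp (Dmon B q w g))"
    using subsetD[OF supp_tw[of "tmmul (mmul B q)" "Xi i" "Dmon B q w g"]] \<open>(k, n) \<in> supp (Dmon B q (i # w) g)\<close>
    unfolding Dmon_cons by simp
  then obtain p where kp: "(k, n) = snd (tmmul (mmul B q) (fst p) (snd p))"
    and pin: "p \<in> supp (Xi i :: _ \<Rightarrow> 'k) \<times> supp (Dmon B q w g)" by (erule imageE)
  define p1 where "p1 = fst p"
  obtain k' n' where p2eq: "snd p = (k', n')" by (cases "snd p")
  have p1: "p1 \<in> supp (Xi i :: _ \<Rightarrow> 'k)" using pin by (simp add: p1_def mem_Times_iff)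
  have p2': "snd p \<in> supp (Dmon B q w g)" using pin by (simp add: mem_Times_iff)
  have kn': "(k, n) = snd (tmmul (mmul B q) p1 (snd p))" using kp by (simp add: p1_def)
  have p2: "(k', n') \<in> supp (Dmon B q w g)" and kn: "(k, n) = snd (tmmul (mmul B q) p1 (k', n'))"
    using p2' kn' p2eq by simp_all
  have ih: "(\<forall>j. deg (fst k') j + deg (fst n') j = deg w j) \<and> snd n' = g"
    using Cons.IH p2 by (simp add: supp_def)
  have "p1 = (([i], \<lambda>_. 0), ([], \<lambda>_. 0)) \<or> p1 = (([], sroot i), ([i], \<lambda>_. 0))"
    using subsetD[OF Xi_supp p1] by simp
  then show ?case
  proof
    assume a: "p1 = (([i], \<lambda>_. 0), ([], \<lambda>_. 0))"
    have "fst k = i # fst k'" "fst n = fst n'" "snd n = (\<lambda>j. 0 + snd n' j)"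
      using kn a by (simp_all add: tmmul_def mmul_def)
    then show ?thesis using ih by (simp add: deg_cons)
  next
    assume a: "p1 = (([], sroot i), ([i], \<lambda>_. 0))"
    have "fst k = fst k'" "fst n = i # fst n'" "snd n = (\<lambda>j. 0 + snd n' j)"
      using kn a by (simp_all add: tmmul_def mmul_def)
    then show ?thesis using ih by (simp add: deg_cons)
  qed
qed

lemma deg_le:
  fixes B :: "'i::finite \<Rightarrow> 'i \<Rightarrow> int" and q :: "'k::field"
  assumes "Dmon B q w g (k, n) \<noteq> 0" shows "deg (fst n) j \<le> deg w j"
proof -
  have "deg (fst k) j + deg (fst n) j = deg w j" using Dmon_inv[OF assms] by blast
  then show ?thesis using deg_nonneg[of "fst k" j] by linarith
qed

lemma ip_zero: "ip B a (\<lambda>_. 0) = 0" by (simp add: ip_def)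
lemma ip_zero2: "ip B (\<lambda>_. 0) a = 0" by (simp add: ip_def)

lemma Dmon_top:
  fixes B :: "'i::finite \<Rightarrow> 'i \<Rightarrow> int" and q :: "'k::field"
  shows "deg (fst n) = deg w \<Longrightarrow>
  Dmon B q w g (k, n) = (if k = ([], \<lambda>j. g j + deg w j) \<and> n = (w, g) then 1 else 0)"
proof (induction w arbitrary: k n)
  case Nil
  then have "fst n = []" using deg_zero by simp
  then show ?case by (cases n) (auto simp: tens_def Kel_def mono_def)
next
  case (Cons i w)
  define D where "D = Dmon B q w g"
  define p1s :: "'i mon \<times> 'i mon" where "p1s = (([], sroot i), ([i], \<lambda>_. 0))"
  define p2s :: "'i mon \<times> 'i mon" where "p2s = (([], \<lambda>j. g j + deg w j), (w, g))"
  define F where "F = (\<lambda>p. if snd (tmmul (mmul B q) (fst p) (snd p)) = (k, n)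
      then Xi i (fst p) * D (snd p) * fst (tmmul (mmul B q) (fst p) (snd p)) else 0)"
  have val: "Dmon B q (i # w) g (k, n) = sum F (supp (Xi i :: _ \<Rightarrow> 'k) \<times> supp D)"
    unfolding Dmon_cons tw_mult_def F_def D_def by simp
  have Dp2s: "D p2s = 1" unfolding D_def p2s_def using Cons.IH[of "(w, g)"] by simp
  have key: "\<forall>p\<in>supp (Xi i :: _ \<Rightarrow> 'k) \<times> supp D. F p \<noteq> 0 \<longrightarrow> p = (p1s, p2s)"
  proof (intro ballI impI)
    fix p assume pin: "p \<in> supp (Xi i :: _ \<Rightarrow> 'k) \<times> supp D" and Fp: "F p \<noteq> 0"
    obtain p1 k' n' where p: "p = (p1, (k', n'))" by (cases p) auto
    have p1: "p1 = (([i], \<lambda>_. 0), ([], \<lambda>_. 0)) \<or> p1 = p1s"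
    proof -
      have "p1 \<in> supp (Xi i :: _ \<Rightarrow> 'k)" using pin p by (simp add: mem_Times_iff)
      then show ?thesis using subsetD[OF Xi_supp] unfolding p1s_def by simp
    qed
    have cond: "snd (tmmul (mmul B q) p1 (k', n')) = (k, n)" and Dn: "D (k', n') \<noteq> 0"
      using Fp p unfolding F_def by (auto split: if_splits)
    have le: "deg (fst n') j \<le> deg w j" for j using deg_le Dn unfolding D_def by blast
    have dn: "deg (fst n) = deg (i # w)" by (rule Cons.prems)
    show "p = (p1s, p2s)"
    proof (cases "p1 = p1s")
      case False
      with p1 have "p1 = (([i], \<lambda>_. 0), ([], \<lambda>_. 0))" by simp
      with cond have "fst n = fst n'" by (auto simp: tmmul_def mmul_def)
      with dn have "deg (fst n') i = 1 + deg w i" by (simp add: deg_cons)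
      with le[of i] show ?thesis by simp
    next
      case True
      with cond have "fst n = i # fst n'" by (auto simp: tmmul_def mmul_def p1s_def)
      with dn have e: "(\<lambda>j. (if j = i then 1 else 0) + deg (fst n') j) = (\<lambda>j. (if j = i then 1 else 0) + deg w j)"
        by (simp add: deg_cons)
      have "deg (fst n') = deg w"
      proof
        fix j show "deg (fst n') j = deg w j" using fun_cong[OF e, of j] by simp
      qed
      then have "D (k', n') = (if k' = ([], \<lambda>j. g j + deg w j) \<and> n' = (w, g) then 1 else 0)"
        unfolding D_def by (rule Cons.IH)
      with Dn have "(k', n') = p2s" by (auto simp: p2s_def split: if_splits)
      with True p show ?thesis by simp
    qed
  qed
  have fin: "finite (supp (Xi i :: _ \<Rightarrow> 'k) \<times> supp D)"
  proof -
    have "finite (supp (Xi i :: _ \<Rightarrow> 'k))" by (rule finite_subset[OF Xi_supp]) simp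
    then show ?thesis using fin_Dmon[of B q w g] unfolding D_def by simp
  qed
  have inn: "(p1s, p2s) \<in> supp (Xi i :: _ \<Rightarrow> 'k) \<times> supp D"
    using Dp2s by (simp add: supp_def p1s_def Xi_val)
  have tm: "snd (tmmul (mmul B q) p1s p2s) = (([], \<lambda>j. g j + deg (i # w) j), (i # w, g))"
    by (auto simp: tmmul_def mmul_def p1s_def p2s_def deg_cons sroot_def)
  have co: "fst (tmmul (mmul B q) p1s p2s) = 1"
    by (simp add: tmmul_def mmul_def p1s_def p2s_def ip_zero ip_zero2)
  have "Dmon B q (i # w) g (k, n) = F (p1s, p2s)"
    using val sum_single[OF fin key] inn by simp
  also have "\<dots> = (if (([], \<lambda>j. g j + deg (i # w) j), (i # w, g)) = (k, n) then 1 else 0)"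
    unfolding F_def using tm co Dp2s by (simp add: p1s_def Xi_val)
  finally show ?case by auto
qed



lemma comb:
  assumes "subsp S" "finite A" "\<forall>v\<in>A. d v = 0 \<or> g v \<in> S"
  shows "(\<lambda>m. \<Sum>v\<in>A. d v * g v m) \<in> S"
  using assms(2,3)
proof (induction A rule: finite_induct)
  case empty
  then show ?case using assms(1) by (simp add: subsp_def)
next
  case (insert a A)
  have IH: "(\<lambda>m. \<Sum>v\<in>A. d v * g v m) \<in> S" using insert by simp
  have add: "\<forall>f\<in>S. \<forall>g\<in>S. (\<lambda>m. f m + g m) \<in> S" and sm: "\<forall>c. \<forall>f\<in>S. (\<lambda>m. c * f m) \<in> S"
    using assms(1) by (simp_all add: subsp_def)
  show ?case
  proof (cases "d a = 0")
    case True
    then show ?thesis using IH insert by simp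
  next
    case False
    then have "g a \<in> S" using insert by simp
    then have ga: "(\<lambda>m. d a * g a m) \<in> S" by (rule cl_smult[OF sm])
    have "(\<lambda>m. d a * g a m + (\<Sum>v\<in>A. d v * g v m)) \<in> S" by (rule cl_add[OF add ga IH])
    then show ?thesis using insert by simp
  qed
qed

lemma ctr_lspan:
  assumes S: "subsp S" and L: "lin \<phi>" and T: "T \<in> lspan X"
    and X: "\<forall>v\<in>X. \<exists>a b. v = tens a b \<and> (a \<in> S \<or> \<phi> b = 0)"
  shows "(\<lambda>k. \<phi> (\<lambda>n. T (k, n))) \<in> S"
proof -
  obtain A c where A: "finite A" "A \<subseteq> X" and Teq: "T = (\<lambda>p. \<Sum>v\<in>A. c v * v p)"
    using T unfolding lspan_def by blast
  have "\<forall>v\<in>A. \<exists>ab. v = tens (fst ab) (snd ab) \<and> (fst ab \<in> S \<or> \<phi> (snd ab) = 0)"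
    using X A(2) by fastforce
  then obtain f where f: "\<forall>v\<in>A. v = tens (fst (f v)) (snd (f v)) \<and> (fst (f v) \<in> S \<or> \<phi> (snd (f v)) = 0)"
    by (rule bchoice[elim_format]) blast
  have eq: "(\<lambda>k. \<phi> (\<lambda>n. T (k, n))) = (\<lambda>k. \<Sum>v\<in>A. (c v * \<phi> (snd (f v))) * fst (f v) k)"
  proof
    fix k
    have "\<phi> (\<lambda>n. T (k, n)) = \<phi> (\<lambda>n. \<Sum>v\<in>A. c v * (\<lambda>v n. v (k, n)) v n)" by (simp add: Teq)
    also have "\<dots> = (\<Sum>v\<in>A. c v * \<phi> (\<lambda>n. v (k, n)))" by (rule lin_sum[OF L])
    also have "\<dots> = (\<Sum>v\<in>A. (c v * \<phi> (snd (f v))) * fst (f v) k)"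
    proof (rule sum.cong)
      fix v assume v: "v \<in> A"
      have "(\<lambda>n. v (k, n)) = (\<lambda>n. fst (f v) k * snd (f v) n)"
        using f v by (metis tens_def fst_conv snd_conv)
      then have "\<phi> (\<lambda>n. v (k, n)) = fst (f v) k * \<phi> (snd (f v))" using lin_smult[OF L] by simp
      then show "c v * \<phi> (\<lambda>n. v (k, n)) = (c v * \<phi> (snd (f v))) * fst (f v) k" by simp
    qed simp
    finally show "\<phi> (\<lambda>n. T (k, n)) = (\<Sum>v\<in>A. (c v * \<phi> (snd (f v))) * fst (f v) k)" .
  qed
  show ?thesis unfolding eq
    by (rule comb[OF S A(1)]) (use f in auto)
qed



theorem mainTheorem10:
  fixes B :: "'i::finite \<Rightarrow> 'i \<Rightarrow> int" and q :: "'k::field"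
    and C J :: "('i list \<times> ('i \<Rightarrow> int) \<Rightarrow> 'k) set"
    and x :: "'i list \<times> ('i \<Rightarrow> int) \<Rightarrow> 'k"
    and \<beta> \<gamma> :: "'i \<Rightarrow> int"
  assumes "semisimple_form B"
    and "q \<noteq> 0" and "\<forall>n>0. q ^ n \<noteq> 1"
    and "right_coideal B q C"
    and "x \<in> C" and "\<forall>m\<in>supp x. snd m = \<beta>" and "x \<notin> serre_ideal B q"
    and "left_coideal B q J" and "homogeneous J"
    and "pr \<gamma> \<beta> x \<notin> J"
    and "\<forall>\<gamma>'. rprec \<gamma> \<gamma>' \<longrightarrow> pr \<gamma>' \<beta> x \<in> J"
  shows "Kel (\<lambda>i. \<beta> i + \<gamma> i) \<in> C"
proof -
  define I where "I = serre_ideal B q"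
  have subC: "subsp C" and IC: "I \<subseteq> C"
    and DC: "\<forall>c\<in>C. Delta B q c \<in> lspan ({tens a b | a b. a \<in> C \<and> b \<in> fin} \<union>
                                   {tens a b | a b. a \<in> fin \<and> b \<in> I})"
    using assms(4) unfolding right_coideal_def I_def by auto
  have subJ: "subsp J" and IJ: "I \<subseteq> J"
    and DJ: "\<forall>c\<in>J. Delta B q c \<in> lspan ({tens a b | a b. a \<in> fin \<and> b \<in> J} \<union>
                                   {tens a b | a b. a \<in> I \<and> b \<in> fin})"
    using assms(8) unfolding left_coideal_def I_def by auto
  have Cadd: "\<forall>f\<in>C. \<forall>g\<in>C. (\<lambda>m. f m + g m) \<in> C" and Csm: "\<forall>c. \<forall>f\<in>C. (\<lambda>m. c * f m) \<in> C"
    using subC by (simp_all add: subsp_def)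
  have Jadd: "\<forall>f\<in>J. \<forall>g\<in>J. (\<lambda>m. f m + g m) \<in> J" and Jsm: "\<forall>c. \<forall>f\<in>J. (\<lambda>m. c * f m) \<in> J"
    and J0: "(\<lambda>_. 0) \<in> J"
    using subJ by (simp_all add: subsp_def)
  have finS: "finite (supp x)" using assms(5) subC by (auto simp: subsp_def fin_def)
  define M where "M = {m :: 'i mon. deg (fst m) = \<gamma> \<and> snd m = \<beta>}"
  have finM: "finite M"
  proof -
    define N where "N = nat (\<Sum>j\<in>UNIV. \<gamma> j)"
    have "M \<subseteq> {xs. set xs \<subseteq> UNIV \<and> length xs \<le> N} \<times> {\<beta>}"
    proof
      fix m assume "m \<in> M"
      then have "deg (fst m) = \<gamma>" "snd m = \<beta>" by (auto simp: M_def)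
      moreover have "int (length (fst m)) = (\<Sum>j\<in>UNIV. deg (fst m) j)" by (rule length_deg)
      ultimately have "length (fst m) \<le> N" by (simp add: N_def)
      then show "m \<in> {xs. set xs \<subseteq> UNIV \<and> length xs \<le> N} \<times> {\<beta>}"
        using \<open>snd m = \<beta>\<close> by (cases m) auto
    qed
    moreover have "finite ({xs. set xs \<subseteq> (UNIV::'i set) \<and> length xs \<le> N} \<times> {\<beta>})"
      using finite_lists_length_le[of "UNIV::'i set" N] by simp
    ultimately show ?thesis by (rule finite_subset)
  qed
  define W where "W = {u \<in> J. \<forall>n. n \<notin> M \<longrightarrow> u n = 0}"
  define v where "v = pr \<gamma> \<beta> x"
  have "\<exists>\<phi>. lin \<phi> \<and> (\<forall>w\<in>W. \<phi> w = 0) \<and> \<phi> v \<noteq> 0"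
  proof (rule sep[OF finM])
    show "(\<lambda>_. 0) \<in> W" using J0 by (simp add: W_def)
    show "\<forall>f\<in>W. \<forall>g\<in>W. (\<lambda>n. f n + g n) \<in> W"
    proof (intro ballI)
      fix f g assume "f \<in> W" "g \<in> W"
      then show "(\<lambda>n. f n + g n) \<in> W" using cl_add[OF Jadd, of f g] by (simp add: W_def)
    qed
    show "\<forall>c. \<forall>f\<in>W. (\<lambda>n. c * f n) \<in> W"
    proof (intro ballI allI)
      fix c f assume "f \<in> W"
      then show "(\<lambda>n. c * f n) \<in> W" using cl_smult[OF Jsm, of f c] by (simp add: W_def)
    qed
    show "\<forall>w\<in>W. \<forall>n. n \<notin> M \<longrightarrow> w n = 0" by (simp add: W_def)
    show "\<forall>n. n \<notin> M \<longrightarrow> v n = 0" by (simp add: v_def pr_def M_def)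
    show "v \<notin> W" using assms(10) by (simp add: W_def v_def)
  qed
  then obtain \<phi>0 where L0: "lin \<phi>0" and K0: "\<forall>w\<in>W. \<phi>0 w = 0" and V0: "\<phi>0 v \<noteq> 0" by blast
  define \<phi> where "\<phi> = (\<lambda>u. \<phi>0 (pr \<gamma> \<beta> u))"
  have L: "lin \<phi>"
  proof -
    have "pr \<gamma> \<beta> (\<lambda>n. u n + w n) = (\<lambda>n. pr \<gamma> \<beta> u n + pr \<gamma> \<beta> w n)" for u w :: "'i mon \<Rightarrow> 'k"
      by (auto simp: pr_def)
    moreover have "pr \<gamma> \<beta> (\<lambda>n. c * u n) = (\<lambda>n. c * pr \<gamma> \<beta> u n)" for c and u :: "'i mon \<Rightarrow> 'k"
      by (auto simp: pr_def)
    ultimately show ?thesis using L0 unfolding lin_def \<phi>_def by simp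
  qed
  have killJ: "\<phi> j = 0" if "j \<in> J" for j
  proof -
    have "pr \<gamma> \<beta> j \<in> J" using assms(9) that unfolding homogeneous_def by blast
    then have "pr \<gamma> \<beta> j \<in> W" by (simp add: W_def pr_def M_def)
    then show ?thesis using K0 by (simp add: \<phi>_def)
  qed
  define tgt :: "'i mon" where "tgt = ([], \<lambda>i. \<beta> i + \<gamma> i)"
  define E where "E = (\<lambda>m k. \<phi> (\<lambda>n. Dmon B q (fst m) (snd m) (k, n)))"
  have expand: "(\<lambda>k. \<phi> (\<lambda>n. Delta B q f (k, n))) = (\<lambda>k. \<Sum>m\<in>supp f. f m * E m k)" for f
  proof
    fix k
    have "\<phi> (\<lambda>n. Delta B q f (k, n)) = \<phi> (\<lambda>n. \<Sum>m\<in>supp f. f m * (\<lambda>m n. Dmon B q (fst m) (snd m) (k, n)) m n)"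
      by (simp add: Delta_def)
    also have "\<dots> = (\<Sum>m\<in>supp f. f m * E m k)" unfolding E_def by (rule lin_sum[OF L])
    finally show "\<phi> (\<lambda>n. Delta B q f (k, n)) = (\<Sum>m\<in>supp f. f m * E m k)" .
  qed
  have E1: "E m k = (if k = tgt then \<phi>0 (mono m) else 0)" if "snd m = \<beta>" "deg (fst m) = \<gamma>" for m k
  proof -
    have "pr \<gamma> \<beta> (\<lambda>n. Dmon B q (fst m) (snd m) (k, n)) = (if k = tgt then mono m else (\<lambda>_. 0))"
    proof
      fix n :: "'i mon"
      show "pr \<gamma> \<beta> (\<lambda>n. Dmon B q (fst m) (snd m) (k, n)) n = (if k = tgt then mono m else (\<lambda>_. 0)) n"
      proof (cases "deg (fst n) = \<gamma> \<and> snd n = \<beta>")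
        case True
        then have "Dmon B q (fst m) (snd m) (k, n) =
            (if k = ([], \<lambda>j. snd m j + deg (fst m) j) \<and> n = (fst m, snd m) then 1 else 0)"
          using that by (intro Dmon_top) simp
        then show ?thesis using True that
          by (cases m) (auto simp: pr_def tgt_def mono_def)
      next
        case False
        then show ?thesis using that by (cases m) (auto simp: pr_def mono_def)
      qed
    qed
    moreover have "pr \<gamma> \<beta> (mono m) = (mono m :: 'i mon \<Rightarrow> 'k)"
      using that by (auto simp: pr_def mono_def fun_eq_iff)
    ultimately show ?thesis unfolding E_def \<phi>_def using lin_zero[OF L0] by auto
  qed
  have E3: "E m k = 0" if "\<not> (\<forall>j. \<gamma> j \<le> deg (fst m) j)" for m k
  proof -
    have "pr \<gamma> \<beta> (\<lambda>n. Dmon B q (fst m) (snd m) (k, n)) = (\<lambda>_. 0)"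
    proof
      fix n :: "'i mon"
      show "pr \<gamma> \<beta> (\<lambda>n. Dmon B q (fst m) (snd m) (k, n)) n = 0"
      proof (cases "deg (fst n) = \<gamma>")
        case True
        have "Dmon B q (fst m) (snd m) (k, n) = 0"
        proof (rule ccontr)
          assume "Dmon B q (fst m) (snd m) (k, n) \<noteq> 0"
          then have "\<forall>j. deg (fst n) j \<le> deg (fst m) j" using deg_le by blast
          then show False using that True by simp
        qed
        then show ?thesis by (simp add: pr_def)
      qed (simp add: pr_def)
    qed
    then show ?thesis unfolding E_def \<phi>_def using lin_zero[OF L0] by simp
  qed
  define S where "S = supp x"
  define A1 where "A1 = {m\<in>S. deg (fst m) = \<gamma>}"
  define A2 where "A2 = {m\<in>S. (\<forall>j. \<gamma> j \<le> deg (fst m) j) \<and> deg (fst m) \<noteq> \<gamma>}"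
  define A3 where "A3 = {m\<in>S. \<not> (\<forall>j. \<gamma> j \<le> deg (fst m) j)}"
  have finA: "finite A1" "finite A2" "finite A3" using finS by (auto simp: A1_def A2_def A3_def S_def)
  have Sdec: "S = A1 \<union> (A2 \<union> A3)" by (auto simp: A1_def A2_def A3_def)
  have disj: "A1 \<inter> (A2 \<union> A3) = {}" "A2 \<inter> A3 = {}"
    by (auto simp: A1_def A2_def A3_def)
  have snd_S: "snd m = \<beta>" if "m \<in> S" for m using assms(6) that by (simp add: S_def)
  have veq: "v = (\<lambda>n. \<Sum>m\<in>A1. x m * mono m n)"
  proof
    fix n
    have "(\<Sum>m\<in>A1. x m * mono m n) = (if n \<in> A1 then x n * mono n n else 0)"
      by (rule sum_single[OF finA(1)]) (auto simp: mono_def)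
    also have "\<dots> = v n"
      using snd_S by (auto simp: A1_def S_def v_def pr_def mono_def supp_def)
    finally show "v n = (\<Sum>m\<in>A1. x m * mono m n)" by simp
  qed
  define c0 where "c0 = \<phi>0 v"
  have c0: "c0 = (\<Sum>m\<in>A1. x m * \<phi>0 (mono m))"
    unfolding c0_def veq by (rule lin_sum[OF L0])
  define y where "y = (\<lambda>k. \<phi> (\<lambda>n. Delta B q x (k, n)))"
  define y2 where "y2 = (\<lambda>k. \<Sum>m\<in>A2. x m * E m k)"
  have yeq: "y k = (if k = tgt then c0 else 0) + y2 k" for k
  proof -
    have "y k = (\<Sum>m\<in>S. x m * E m k)" unfolding y_def S_def using fun_cong[OF expand[of x], of k] by simp
    also have "\<dots> = (\<Sum>m\<in>A1. x m * E m k) + ((\<Sum>m\<in>A2. x m * E m k) + (\<Sum>m\<in>A3. x m * E m k))"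
      unfolding Sdec using finA disj by (simp add: sum.union_disjoint)
    also have "(\<Sum>m\<in>A3. x m * E m k) = 0"
      by (rule sum.neutral) (auto simp: A3_def E3)
    also have "(\<Sum>m\<in>A1. x m * E m k) = (\<Sum>m\<in>A1. x m * (if k = tgt then \<phi>0 (mono m) else 0))"
      by (rule sum.cong) (auto simp: A1_def E1 snd_S)
    also have "\<dots> = (if k = tgt then c0 else 0)" by (simp add: c0)
    finally show ?thesis by (simp add: y2_def)
  qed
  have yC: "y \<in> C"
    unfolding y_def
  proof (rule ctr_lspan[OF subC L])
    show "Delta B q x \<in> lspan ({tens a b | a b. a \<in> C \<and> b \<in> fin} \<union> {tens a b | a b. a \<in> fin \<and> b \<in> I})"
      using DC assms(5) by blast
    show "\<forall>v\<in>{tens a b | a b. a \<in> C \<and> b \<in> fin} \<union> {tens a b | a b. a \<in> fin \<and> b \<in> I}.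
        \<exists>a b. v = tens a b \<and> (a \<in> C \<or> \<phi> b = 0)"
      using killJ IJ by blast
  qed
  define G where "G = (\<lambda>m. deg (fst m)) ` A2"
  define ya where "ya = (\<lambda>\<alpha> k. \<phi> (\<lambda>n. Delta B q (pr \<alpha> \<beta> x) (k, n)))"
  have yaC: "ya \<alpha> \<in> C" if "\<alpha> \<in> G" for \<alpha>
  proof -
    have "rprec \<gamma> \<alpha>" using that by (auto simp: G_def A2_def rprec_def)
    then have pJ: "pr \<alpha> \<beta> x \<in> J" using assms(11) by blast
    show ?thesis unfolding ya_def
    proof (rule ctr_lspan[OF subC L])
      show "Delta B q (pr \<alpha> \<beta> x) \<in> lspan ({tens a b | a b. a \<in> fin \<and> b \<in> J} \<union> {tens a b | a b. a \<in> I \<and> b \<in> fin})"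
        using DJ pJ by blast
      show "\<forall>v\<in>{tens a b | a b. a \<in> fin \<and> b \<in> J} \<union> {tens a b | a b. a \<in> I \<and> b \<in> fin}.
          \<exists>a b. v = tens a b \<and> (a \<in> C \<or> \<phi> b = 0)"
        using killJ IC by blast
    qed
  qed
  have yaeq: "ya \<alpha> k = (\<Sum>m\<in>{m\<in>A2. deg (fst m) = \<alpha>}. x m * E m k)" if "\<alpha> \<in> G" for \<alpha> k
  proof -
    have "ya \<alpha> k = (\<Sum>m\<in>supp (pr \<alpha> \<beta> x). pr \<alpha> \<beta> x m * E m k)"
      unfolding ya_def using fun_cong[OF expand[of "pr \<alpha> \<beta> x"], of k] by simp
    also have "supp (pr \<alpha> \<beta> x) = {m\<in>A2. deg (fst m) = \<alpha>}"
      using that snd_S by (auto simp: G_def A2_def S_def supp_def pr_def)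
    also have "(\<Sum>m\<in>{m\<in>A2. deg (fst m) = \<alpha>}. pr \<alpha> \<beta> x m * E m k) = (\<Sum>m\<in>{m\<in>A2. deg (fst m) = \<alpha>}. x m * E m k)"
      by (rule sum.cong) (auto simp: pr_def A2_def snd_S)
    finally show ?thesis .
  qed
  have finG: "finite G" using finA(2) by (simp add: G_def)
  have y2eq: "y2 = (\<lambda>k. \<Sum>\<alpha>\<in>G. 1 * ya \<alpha> k)"
  proof
    fix k
    have "(\<Sum>\<alpha>\<in>G. 1 * ya \<alpha> k) = (\<Sum>\<alpha>\<in>G. (\<Sum>m\<in>{m\<in>A2. deg (fst m) = \<alpha>}. x m * E m k))"
      by (rule sum.cong) (simp_all add: yaeq)
    also have "\<dots> = (\<Sum>m\<in>A2. x m * E m k)"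
      by (rule sum.group[OF finA(2) finG]) (simp add: G_def)
    finally show "y2 k = (\<Sum>\<alpha>\<in>G. 1 * ya \<alpha> k)" by (simp add: y2_def)
  qed
  have y2C: "y2 \<in> C" unfolding y2eq by (rule comb[OF subC finG]) (use yaC in auto)
  have c0nz: "c0 \<noteq> 0" using V0 by (simp add: c0_def)
  have m2: "(\<lambda>k. (-1) * y2 k) \<in> C" by (rule cl_smult[OF Csm y2C])
  have s: "(\<lambda>k. y k + (-1) * y2 k) \<in> C" by (rule cl_add[OF Cadd yC m2])
  have "(\<lambda>k. inverse c0 * (y k + (-1) * y2 k)) \<in> C" by (rule cl_smult[OF Csm s])
  moreover have "(\<lambda>k. inverse c0 * (y k + (-1) * y2 k)) = Kel (\<lambda>i. \<beta> i + \<gamma> i)"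
  proof
    fix k show "inverse c0 * (y k + (-1) * y2 k) = Kel (\<lambda>i. \<beta> i + \<gamma> i) k"
      using c0nz by (simp add: yeq Kel_def mono_def tgt_def)
  qed
  ultimately show ?thesis by simp
qed


end
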